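(* Let $\Delta\in(0,1]$. There exist an MDP and a parameter space $\Theta=\{\theta_1,\theta_2\}$ with $D_{\mathrm{KL}}(p_{\theta_1}\|p_{\theta_2})=\infty$ or $D_{\mathrm{KL}}(p_{\theta_2}\|p_{\theta_1})=\infty$, and $J(\theta_1)-J(\theta_2)=\Delta$, such that for any $n\ge1$ every algorithm for the online policy optimization problem suffers expected regret $\mathbb{E}R(n)\ge\frac{1}{8\Delta}\log(\Delta^2 n)$.
   Context: An MDP with state space $\mathcal S$, action space $\mathcal A$, transition kernel $P$, initial-state distribution $\mu$, reward function and horizon $H$ generates trajectories $\tau=(s_0,a_0,\dots,s_{H-1},a_{H-1})$ with return $\mathcal R(\tau)$. A parametric policy $\pi_\theta(\cdot|s)$, $\theta\in\Theta$, induces the trajectory distribution $p_\theta(\tau)=\mu(s_0)\prod_{h=0}^{H-1}\pi_\theta(a_h|s_h)P(s_{h+1}|s_h,a_h)$, and its expected return is $J(\theta)=\mathbb E_{\tau\sim p_\theta}[\mathcal R(\tau)]$. Online policy optimization (with mediator feedback): at each round $t=1,\dots,n$ the algorithm selects $\theta_t\in\Theta$ as a (possibly randomized) function of the history $\{(\theta_i,\tau_i,\mathcal R(\tau_i))\}_{i<t}$, executes $\pi_{\theta_t}$, and observes a trajectory $\tau_t\sim p_{\theta_t}$ and its return $\mathcal R(\tau_t)$. With $J^*=\sup_{\theta\in\Theta}J(\theta)$ and $\Delta(\theta)=J^*-J(\theta)$, the regret is $R(n)=\sum_{t=1}^n\Delta(\theta_t)$. $D_{\mathrm{KL}}$ denotes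 the Kullback–Leibler divergence. *)

theory Defs
  imports "HOL-Probability.Probability"
begin

record mdp =
  init    :: "nat pmf"
  trans   :: "nat \<Rightarrow> nat \<Rightarrow> nat pmf"
  rew     :: "nat \<Rightarrow> nat \<Rightarrow> real"
  horizon :: nat

type_synonym traj = "(nat \<times> nat) list"

type_synonym policy = "nat \<Rightarrow> nat \<Rightarrow> nat pmf"   \<comment> \<open>theta \<Rightarrow> s \<Rightarrow> pi_theta(.|s)\<close>

definition ret :: "mdp \<Rightarrow> traj \<Rightarrow> real" where
  "ret M \<tau> = sum_list (map (\<lambda>(s, a). rew M s a) \<tau>)"

fun traj_from :: "mdp \<Rightarrow> (nat \<Rightarrow> nat pmf) \<Rightarrow> nat \<Rightarrow> nat \<Rightarrow> traj pmf" where
  "traj_from M pol s 0 = return_pmf []"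
| "traj_from M pol s (Suc k) =
     bind_pmf (pol s) (\<lambda>a. bind_pmf (trans M s a) (\<lambda>s'.
       bind_pmf (traj_from M pol s' k) (\<lambda>rest. return_pmf ((s, a) # rest))))"

definition traj_dist :: "mdp \<Rightarrow> policy \<Rightarrow> nat \<Rightarrow> traj pmf" where
  "traj_dist M \<pi> \<theta> = bind_pmf (init M) (\<lambda>s0. traj_from M (\<pi> \<theta>) s0 (horizon M))"

definition Jret :: "mdp \<Rightarrow> policy \<Rightarrow> nat \<Rightarrow> real" where
  "Jret M \<pi> \<theta> = measure_pmf.expectation (traj_dist M \<pi> \<theta>) (ret M)"

definition KL_pmf :: "'a pmf \<Rightarrow> 'a pmf \<Rightarrow> ereal" where
  "KL_pmf p q =
     (if set_pmf p \<subseteq> set_pmf q \<and>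
         (\<lambda>x. \<bar>pmf p x * ln (pmf p x / pmf q x)\<bar>) summable_on UNIV
      then ereal (\<Sum>\<^sub>\<infinity>x. pmf p x * ln (pmf p x / pmf q x))
      else \<infinity>)"

text \<open>History entries (theta_i, tau_i, R(tau_i)); an algorithm maps the history
of the previous rounds to a (randomized) choice of parameter.\<close>
type_synonym history = "(nat \<times> traj \<times> real) list"
type_synonym algorithm = "history \<Rightarrow> nat pmf"

definition valid_alg :: "nat set \<Rightarrow> algorithm \<Rightarrow> bool" where
  "valid_alg \<Theta> alg \<longleftrightarrow> (\<forall>h. set_pmf (alg h) \<subseteq> \<Theta>)"

fun hist_dist :: "mdp \<Rightarrow> policy \<Rightarrow> algorithm \<Rightarrow> nat \<Rightarrow> history pmf" where
  "hist_dist M \<pi> alg 0 = return_pmf []"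
| "hist_dist M \<pi> alg (Suc t) =
     bind_pmf (hist_dist M \<pi> alg t) (\<lambda>h. bind_pmf (alg h) (\<lambda>\<theta>.
       bind_pmf (traj_dist M \<pi> \<theta>) (\<lambda>\<tau>. return_pmf (h @ [(\<theta>, \<tau>, ret M \<tau>)]))))"

definition Jstar :: "mdp \<Rightarrow> policy \<Rightarrow> nat set \<Rightarrow> real" where
  "Jstar M \<pi> \<Theta> = (SUP \<theta>\<in>\<Theta>. Jret M \<pi> \<theta>)"

definition gap :: "mdp \<Rightarrow> policy \<Rightarrow> nat set \<Rightarrow> nat \<Rightarrow> real" where
  "gap M \<pi> \<Theta> \<theta> = Jstar M \<pi> \<Theta> - Jret M \<pi> \<theta>"

definition regret :: "mdp \<Rightarrow> policy \<Rightarrow> nat set \<Rightarrow> history \<Rightarrow> real" where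
  "regret M \<pi> \<Theta> h = sum_list (map (\<lambda>(\<theta>, _, _). gap M \<pi> \<Theta> \<theta>) h)"

definition exp_regret :: "mdp \<Rightarrow> policy \<Rightarrow> nat set \<Rightarrow> algorithm \<Rightarrow> nat \<Rightarrow> real" where
  "exp_regret M \<pi> \<Theta> alg n =
     measure_pmf.expectation (hist_dist M \<pi> alg n) (regret M \<pi> \<Theta>)"

end

theory Submission
  imports Defs
begin

definition rew0 :: "real \<Rightarrow> nat \<Rightarrow> nat \<Rightarrow> real" where
  "rew0 D s a = (if s = 0 \<and> a \<noteq> 0 then - D else if s = 2 then 4 / D else 0)"

definition MA :: "real \<Rightarrow> mdp" where
  "MA D = \<lparr>init = return_pmf 0, trans = (\<lambda>s a. return_pmf (if a = 0 then 3 else 1)),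
           rew = rew0 D, horizon = 2\<rparr>"

definition MB :: "real \<Rightarrow> mdp" where
  "MB D = \<lparr>init = return_pmf 0, trans = (\<lambda>s a. if a = 0 then return_pmf 3
              else map_pmf (\<lambda>b. if b then 2 else 1) (bernoulli_pmf (D^2/2))),
           rew = rew0 D, horizon = 2\<rparr>"

definition pol :: policy where
  "pol = (\<lambda>\<theta> s. return_pmf (if \<theta> = 0 then 0 else 1))"

lemma trajA: "traj_dist (MA D) pol \<theta> =
   (if \<theta> = 0 then return_pmf [(0,0),(3,0)] else return_pmf [(0,1),(1,1)])"
  by (simp add: traj_dist_def MA_def pol_def numeral_2_eq_2 bind_return_pmf)

lemma trajB: "traj_dist (MB D) pol \<theta> =
   (if \<theta> = 0 then return_pmf [(0,0),(3,0)]
    else map_pmf (\<lambda>b. [(0,1),(if b then 2 else 1, 1)]) (bernoulli_pmf (D^2/2)))"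
  by (simp add: traj_dist_def MB_def pol_def numeral_2_eq_2 map_pmf_def bind_assoc_pmf bind_return_pmf)

lemma retAB: "ret (MA D) = ret (MB D)"
  by (simp add: ret_def MA_def MB_def fun_eq_iff)

lemma JA: "Jret (MA D) pol \<theta> = (if \<theta> = 0 then 0 else - D)"
  unfolding Jret_def trajA by (simp add: ret_def MA_def rew0_def)

lemma JB: assumes "0 < D" "D \<le> 1" shows "Jret (MB D) pol \<theta> = (if \<theta> = 0 then 0 else D)"
proof -
  have "D^2 \<le> 1" using assms by (simp add: power_le_one)
  then show ?thesis using assms
    unfolding Jret_def trajB by (simp add: ret_def MB_def rew0_def power2_eq_square field_simps)
qed

lemma gapA: assumes "0 < D" shows "gap (MA D) pol {0,1} \<theta> = (if \<theta> = 0 then 0 else D)"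
proof -
  have "Sup {-D, 0::real} = 0" using assms by (intro cSup_eq_maximum) auto
  then show ?thesis using assms by (simp add: gap_def Jstar_def JA)
qed

lemma gapB: assumes "0 < D" "D \<le> 1" shows "gap (MB D) pol {0,1} \<theta> = (if \<theta> = 0 then D else 0)"
proof -
  have "Sup {D, 0::real} = D" using assms by (intro cSup_eq_maximum) auto
  then show ?thesis using assms by (simp add: gap_def Jstar_def JB)
qed

definition c1 :: "history \<Rightarrow> nat" where "c1 h = length (filter (\<lambda>x. fst x = 0) h)"
definition c2 :: "history \<Rightarrow> nat" where "c2 h = length (filter (\<lambda>x. fst x \<noteq> 0) h)"

lemma regretA: assumes "0 < D" shows "regret (MA D) pol {0,1} h = D * real (c2 h)"
  unfolding regret_def c2_def gapA[OF assms]
  by (induction h) (auto simp: gapA[OF assms] algebra_simps)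

lemma regretB: assumes "0 < D" "D \<le> 1" shows "regret (MB D) pol {0,1} h = D * real (c1 h)"
  unfolding regret_def c1_def gapB[OF assms]
  by (induction h) (auto simp: gapB[OF assms] algebra_simps)

lemma len_hist: "h \<in> set_pmf (hist_dist M \<pi> alg t) \<Longrightarrow> length h = t"
  by (induction t arbitrary: h) (auto simp: set_bind_pmf)

lemma KLA: "KL_pmf (traj_dist (MA D) pol 0) (traj_dist (MA D) pol 1) = \<infinity>"
  by (simp add: KL_pmf_def trajA)

lemma KLB: "KL_pmf (traj_dist (MB D) pol 0) (traj_dist (MB D) pol 1) = \<infinity>"
  unfolding KL_pmf_def trajB by auto

definition qq :: "real \<Rightarrow> real" where "qq D = 1 - D^2/2"

lemma step1:
  assumes "0 < D" "D \<le> 1"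
  shows "(\<integral>\<^sup>+\<tau>. ennreal (qq D ^ (if \<theta> = 0 then 0 else 1)) * g \<tau> \<partial>traj_dist (MA D) pol \<theta>)
         \<le> (\<integral>\<^sup>+\<tau>. g \<tau> \<partial>traj_dist (MB D) pol \<theta>)"
proof (cases "\<theta> = 0")
  case True
  then show ?thesis by (simp add: trajA trajB)
next
  case False
  have "D^2 \<le> 1" using assms by (simp add: power_le_one)
  then have p: "0 \<le> D^2/2" "D^2/2 \<le> 1" by auto
  have "(\<integral>\<^sup>+\<tau>. g \<tau> \<partial>traj_dist (MB D) pol \<theta>) =
     g [(0,1),(2,1)] * ennreal (D^2/2) + g [(0,1),(1,1)] * ennreal (1 - D^2/2)"
    using False p by (simp add: trajB)
  moreover have "(\<integral>\<^sup>+\<tau>. ennreal (qq D ^ (if \<theta> = 0 then 0 else 1)) * g \<tau> \<partial>traj_dist (MA D) pol \<theta>)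
     = ennreal (1 - D^2/2) * g [(0,1),(1,1)]"
    using False by (simp add: trajA qq_def)
  ultimately show ?thesis by (simp add: mult.commute)
qed

lemma qq_pos: "0 < D \<Longrightarrow> D \<le> 1 \<Longrightarrow> 0 < qq D"
proof -
  assume "0 < D" "D \<le> 1"
  then have "D^2 \<le> 1" by (simp add: power_le_one)
  then show ?thesis by (simp add: qq_def)
qed

lemma c2_snoc: "c2 (h @ [x]) = c2 h + (if fst x = 0 then 0 else 1)"
  by (simp add: c2_def)

lemma key:
  assumes "0 < D" "D \<le> 1"
  shows "(\<integral>\<^sup>+h. ennreal (qq D ^ c2 h) * g h \<partial>hist_dist (MA D) pol alg t)
         \<le> (\<integral>\<^sup>+h. g h \<partial>hist_dist (MB D) pol alg t)"
proof (induction t arbitrary: g)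
  case 0
  then show ?case by (simp add: c2_def)
next
  case (Suc t)
  have q0: "0 \<le> qq D" using qq_pos[OF assms] by simp
  define G where "G h = (\<integral>\<^sup>+\<theta>. \<integral>\<^sup>+\<tau>. g (h @ [(\<theta>, \<tau>, ret (MB D) \<tau>)]) \<partial>traj_dist (MB D) pol \<theta> \<partial>alg h)" for h
  have eq: "(\<integral>\<^sup>+\<theta>. \<integral>\<^sup>+\<tau>. ennreal (qq D ^ c2 (h @ [(\<theta>, \<tau>, ret (MA D) \<tau>)])) * g (h @ [(\<theta>, \<tau>, ret (MA D) \<tau>)]) \<partial>traj_dist (MA D) pol \<theta> \<partial>alg h)
     = ennreal (qq D ^ c2 h) * (\<integral>\<^sup>+\<theta>. \<integral>\<^sup>+\<tau>. ennreal (qq D ^ (if \<theta> = 0 then 0 else 1)) * g (h @ [(\<theta>, \<tau>, ret (MB D) \<tau>)]) \<partial>traj_dist (MA D) pol \<theta> \<partial>alg h)" for h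
  proof -
    have "(\<integral>\<^sup>+\<theta>. \<integral>\<^sup>+\<tau>. ennreal (qq D ^ c2 (h @ [(\<theta>, \<tau>, ret (MA D) \<tau>)])) * g (h @ [(\<theta>, \<tau>, ret (MA D) \<tau>)]) \<partial>traj_dist (MA D) pol \<theta> \<partial>alg h)
      = (\<integral>\<^sup>+\<theta>. ennreal (qq D ^ c2 h) * \<integral>\<^sup>+\<tau>. ennreal (qq D ^ (if \<theta> = 0 then 0 else 1)) * g (h @ [(\<theta>, \<tau>, ret (MB D) \<tau>)]) \<partial>traj_dist (MA D) pol \<theta> \<partial>alg h)"
      by (intro nn_integral_cong) (simp add: c2_snoc power_add ennreal_mult q0 retAB nn_integral_cmult[symmetric] mult.assoc)
    also have "\<dots> = ennreal (qq D ^ c2 h) * (\<integral>\<^sup>+\<theta>. \<integral>\<^sup>+\<tau>. ennreal (qq D ^ (if \<theta> = 0 then 0 else 1)) * g (h @ [(\<theta>, \<tau>, ret (MB D) \<tau>)]) \<partial>traj_dist (MA D) pol \<theta> \<partial>alg h)"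
      by (rule nn_integral_cmult) simp
    finally show ?thesis .
  qed
  have "(\<integral>\<^sup>+h. ennreal (qq D ^ c2 h) * g h \<partial>hist_dist (MA D) pol alg (Suc t))
     = (\<integral>\<^sup>+h. ennreal (qq D ^ c2 h) * (\<integral>\<^sup>+\<theta>. \<integral>\<^sup>+\<tau>. ennreal (qq D ^ (if \<theta> = 0 then 0 else 1)) * g (h @ [(\<theta>, \<tau>, ret (MB D) \<tau>)]) \<partial>traj_dist (MA D) pol \<theta> \<partial>alg h) \<partial>hist_dist (MA D) pol alg t)"
    by (simp add: eq)
  also have "\<dots> \<le> (\<integral>\<^sup>+h. ennreal (qq D ^ c2 h) * G h \<partial>hist_dist (MA D) pol alg t)"
    unfolding G_def
    by (intro nn_integral_mono mult_left_mono step1[OF assms]) simp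
  also have "\<dots> \<le> (\<integral>\<^sup>+h. G h \<partial>hist_dist (MB D) pol alg t)"
    by (rule Suc.IH)
  also have "\<dots> = (\<integral>\<^sup>+h. g h \<partial>hist_dist (MB D) pol alg (Suc t))"
    by (simp add: G_def)
  finally show ?case .
qed

lemma ln_qq: assumes "0 < D" "D \<le> 1" shows "- (D^2) \<le> ln (qq D)"
proof -
  have "D^2 \<le> 1" using assms by (simp add: power_le_one)
  then have "- (D^2/2) - 2 * (D^2/2)^2 \<le> ln (1 - D^2/2)"
    by (intro ln_one_minus_pos_lower_bound) auto
  moreover have "2 * (D^2/2)^2 \<le> D^2/2"
  proof -
    have "D^2 * D^2 \<le> 1 * D^2" using mult_right_mono[OF \<open>D^2 \<le> 1\<close>, of "D^2"] by simp
    moreover have "2 * (D^2/2)^2 = D^2 * D^2 / 2" by (simp add: power2_eq_square)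
    ultimately show ?thesis by linarith
  qed
  ultimately show ?thesis by (simp add: qq_def)
qed

lemma numeric:
  fixes D a R2 :: real and n :: nat
  assumes D: "0 < D" "D \<le> 1" and n: "n \<ge> 1" and a: "0 \<le> a" "a \<le> real n"
    and R2: "R2 \<ge> D * (qq D powr a * (real n - a))"
  shows "max (D * a) R2 \<ge> 1 / (8 * D) * ln (D^2 * real n)"
proof -
  define x where "x = D^2 * real n"
  have xpos: "0 < x" using D n by (simp add: x_def)
  have q0: "0 < qq D" using qq_pos[OF D] .
  show ?thesis
  proof (cases "x \<le> 1")
    case True
    then have "ln x \<le> 0" using xpos by simp
    then have "1 / (8 * D) * ln x \<le> 0" using D by (simp add: divide_nonpos_pos)
    moreover have "0 \<le> D * a" using D a by simp
    ultimately show ?thesis unfolding x_def[symmetric] by linarith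
  next
    case False
    then have x1: "1 < x" by simp
    have lnx: "ln x < x" using xpos ln_less_self by blast
    show ?thesis
    proof (cases "a \<ge> real n / 2")
      case True
      have "1 / (8 * D) * ln x \<le> 1 / (8 * D) * x" using lnx D by (intro mult_left_mono) auto
      also have "\<dots> = D * real n / 8" using D by (simp add: x_def power2_eq_square field_simps)
      also have "\<dots> \<le> D * a" using True D by simp
      finally show ?thesis unfolding x_def[symmetric] by linarith
    next
      case False
      show ?thesis
      proof (cases "D^2 * a \<ge> ln x / 8")
        case True
        have "1 / (8 * D) * ln x \<le> 1 / (8 * D) * (8 * D^2 * a)" using True D
          by (intro mult_left_mono) auto
        also have "\<dots> = D * a" using D by (simp add: power2_eq_square field_simps)
        finally show ?thesis unfolding x_def[symmetric] by linarith
      next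
        case small: False
        have "qq D powr a = exp (a * ln (qq D))" using q0 by (simp add: powr_def)
        also have "\<dots> \<ge> exp (- (D^2 * a))"
        proof -
          have "a * (- (D^2)) \<le> a * ln (qq D)" using ln_qq[OF D] a by (intro mult_left_mono) auto
          then show ?thesis by (simp add: mult.commute)
        qed
        finally have "qq D powr a \<ge> exp (- (D^2 * a))" .
        moreover have "exp (- (D^2 * a)) \<ge> exp (- (ln x / 8))" using small by simp
        moreover have "exp (- (ln x / 8)) = x powr (-1/8)" using xpos by (simp add: powr_def)
        ultimately have qa: "qq D powr a \<ge> x powr (-1/8)" by linarith
        have na: "real n - a \<ge> real n / 2" using False by simp
        have R2b: "R2 \<ge> D * (x powr (-1/8) * (real n / 2))"
          using R2 qa na D xpos
          by (smt (verit) mult_left_mono mult_mono powr_ge_zero q0 a(2) powr_nonneg_iff)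
        have x78: "ln x \<le> 4 * x powr (7/8)"
        proof -
          have "ln (x powr (7/8)) \<le> x powr (7/8)" using xpos
            by (intro less_imp_le ln_less_self) simp
          then have "7/8 * ln x \<le> x powr (7/8)" using xpos by (simp add: ln_powr)
          moreover have "0 \<le> x powr (7/8)" by simp
          ultimately show ?thesis by linarith
        qed
        have "1 / (8 * D) * ln x \<le> 1 / (8 * D) * (4 * x powr (7/8))"
          using x78 D by (intro mult_left_mono) auto
        also have "x powr (7/8) = x * x powr (-1/8)"
        proof -
          have "x * x powr (-1/8) = x powr 1 * x powr (-1/8)" using xpos by simp
          also have "\<dots> = x powr (1 + (-1/8))" by (simp only: powr_add)
          also have "\<dots> = x powr (7/8)" by simp
          finally show ?thesis by simp
        qed
        also have "1 / (8 * D) * (4 * (x * x powr (-1/8))) = D * (x powr (-1/8) * (real n / 2))"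
          using D by (simp add: x_def power2_eq_square field_simps)
        finally show ?thesis using R2b unfolding x_def[symmetric] by linarith
      qed
    qed
  qed
qed

lemma int_bounded:
  fixes f :: "'a \<Rightarrow> real"
  assumes "\<And>h. h \<in> set_pmf p \<Longrightarrow> \<bar>f h\<bar> \<le> B"
  shows "integrable (measure_pmf p) f"
  by (rule measure_pmf.integrable_const_bound[where B=B]) (auto intro!: AE_pmfI assms)

lemma pointwise:
  fixes q a k n :: real
  assumes "0 < q" "q \<le> 1" "k \<le> n"
  shows "q powr k * (n - k) \<ge> q powr a * ((n - k) - (- ln q) * (n - a) * (k - a))"
proof -
  define L where "L = - ln q"
  have L0: "0 \<le> L" using assms by (simp add: L_def)
  have "q powr k = exp (- L * k)" using assms by (simp add: powr_def L_def)
  also have "\<dots> = exp (- L * a) * exp (- L * (k - a))" by (simp add: exp_add[symmetric] algebra_simps)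
  finally have qk: "q powr k = q powr a * exp (- L * (k - a))" using assms by (simp add: powr_def L_def)
  have e: "exp (- L * (k - a)) \<ge> 1 - L * (k - a)" using exp_ge_add_one_self[of "- L * (k - a)"] by simp
  have "q powr k * (n - k) \<ge> q powr a * ((1 - L * (k - a)) * (n - k))"
    unfolding qk using e assms by (simp add: mult.assoc mult_left_mono mult_right_mono)
  moreover have "(1 - L * (k - a)) * (n - k) \<ge> (n - k) - L * (n - a) * (k - a)"
  proof -
    have "(1 - L * (k - a)) * (n - k) = (n - k) - L * (n - a) * (k - a) + L * (k - a)^2"
      by (simp add: power2_eq_square algebra_simps)
    moreover have "0 \<le> L * (k - a)^2" using L0 by simp
    ultimately show ?thesis by linarith
  qed
  ultimately show ?thesis unfolding L_def[symmetric]
    by (smt (verit) mult_left_mono powr_ge_zero)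
qed

lemma c12: "c1 h + c2 h = length h"
  unfolding c1_def c2_def by (rule sum_length_filter_compl)

lemma lower_B:
  fixes alg :: algorithm and n :: nat
  assumes D: "0 < D" "D \<le> 1"
  defines "A \<equiv> hist_dist (MA D) pol alg n" and "B \<equiv> hist_dist (MB D) pol alg n"
  defines "a \<equiv> measure_pmf.expectation A (\<lambda>h. real (c2 h))"
  shows "0 \<le> a" "a \<le> real n"
    "measure_pmf.expectation B (\<lambda>h. real (c1 h)) \<ge> qq D powr a * (real n - a)"
proof -
  have q0: "0 < qq D" using qq_pos[OF D] .
  have q1: "qq D \<le> 1" by (simp add: qq_def)
  have suppA: "c1 h + c2 h = n" if "h \<in> set_pmf A" for h
    using len_hist[of h "MA D" pol alg n] c12[of h] that by (simp add: A_def)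
  have suppB: "c1 h + c2 h = n" if "h \<in> set_pmf B" for h
    using len_hist[of h "MB D" pol alg n] c12[of h] that by (simp add: B_def)
  have bA: "c1 h \<le> n" "c2 h \<le> n" "real (c1 h) = real n - real (c2 h)" if "h \<in> set_pmf A" for h
    using suppA[OF that] by linarith+
  have bB: "c1 h \<le> n" if "h \<in> set_pmf B" for h
    using suppB[OF that] by linarith
  have intA2: "integrable (measure_pmf A) (\<lambda>h. real (c2 h))"
    by (rule int_bounded[where B="real n"]) (simp add: bA)
  have intB1: "integrable (measure_pmf B) (\<lambda>h. real (c1 h))"
    by (rule int_bounded[where B="real n"]) (simp add: bB)
  have intAq: "integrable (measure_pmf A) (\<lambda>h. qq D ^ c2 h * real (c1 h))"
  proof (rule int_bounded[where B="real n"])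
    fix h assume "h \<in> set_pmf A"
    then have c: "real (c1 h) \<le> real n" using bA by simp
    have q: "qq D ^ c2 h \<le> 1" using q0 q1 by (simp add: power_le_one)
    have q': "0 \<le> qq D ^ c2 h" using q0 by simp
    have "qq D ^ c2 h * real (c1 h) \<le> 1 * real (c1 h)"
      by (rule mult_right_mono[OF q]) simp
    moreover have "0 \<le> qq D ^ c2 h * real (c1 h)" using q' by simp
    ultimately show "\<bar>qq D ^ c2 h * real (c1 h)\<bar> \<le> real n" using c by simp
  qed
  show "0 \<le> a" unfolding a_def by simp
  show "a \<le> real n"
  proof -
    have "a \<le> measure_pmf.expectation A (\<lambda>h. real n)"
      unfolding a_def by (rule integral_mono_AE[OF intA2]) (simp, rule AE_pmfI, simp add: bA)
    then show ?thesis by simp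
  qed
  have step1: "measure_pmf.expectation A (\<lambda>h. qq D ^ c2 h * real (c1 h)) \<le> measure_pmf.expectation B (\<lambda>h. real (c1 h))"
  proof -
    have "ennreal (measure_pmf.expectation A (\<lambda>h. qq D ^ c2 h * real (c1 h)))
        = (\<integral>\<^sup>+h. ennreal (qq D ^ c2 h * real (c1 h)) \<partial>A)"
      by (rule nn_integral_eq_integral[symmetric, OF intAq]) (use q0 in simp)
    also have "\<dots> = (\<integral>\<^sup>+h. ennreal (qq D ^ c2 h) * ennreal (real (c1 h)) \<partial>A)"
      using q0 by (simp add: ennreal_mult)
    also have "\<dots> \<le> (\<integral>\<^sup>+h. ennreal (real (c1 h)) \<partial>B)"
      unfolding A_def B_def by (rule key[OF D])
    also have "\<dots> = ennreal (measure_pmf.expectation B (\<lambda>h. real (c1 h)))"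
      by (rule nn_integral_eq_integral[OF intB1]) simp
    finally show ?thesis by (simp add: ennreal_le_iff)
  qed
  define L where "L = - ln (qq D)"
  have step2: "measure_pmf.expectation A (\<lambda>h. qq D powr a * ((real n - real (c2 h)) - L * (real n - a) * (real (c2 h) - a)))
      \<le> measure_pmf.expectation A (\<lambda>h. qq D ^ c2 h * real (c1 h))"
  proof (rule integral_mono_AE[OF _ intAq])
    show "integrable (measure_pmf A) (\<lambda>h. qq D powr a * ((real n - real (c2 h)) - L * (real n - a) * (real (c2 h) - a)))"
      using intA2 by simp
    show "AE h in measure_pmf A. qq D powr a * ((real n - real (c2 h)) - L * (real n - a) * (real (c2 h) - a)) \<le> qq D ^ c2 h * real (c1 h)"
    proof (rule AE_pmfI)
      fix h assume h: "h \<in> set_pmf A"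
      have "real (c1 h) = real n - real (c2 h)" "c2 h \<le> n" using bA[OF h] by auto
      moreover have "qq D ^ c2 h = qq D powr real (c2 h)" using q0 by (simp add: powr_realpow)
      ultimately show "qq D powr a * ((real n - real (c2 h)) - L * (real n - a) * (real (c2 h) - a)) \<le> qq D ^ c2 h * real (c1 h)"
        using pointwise[OF q0 q1, of "real (c2 h)" "real n" a] \<open>c2 h \<le> n\<close> by (simp add: L_def)
    qed
  qed
  have step3: "measure_pmf.expectation A (\<lambda>h. qq D powr a * ((real n - real (c2 h)) - L * (real n - a) * (real (c2 h) - a)))
      = qq D powr a * (real n - a)"
    using intA2 by (simp add: a_def algebra_simps)
  show "measure_pmf.expectation B (\<lambda>h. real (c1 h)) \<ge> qq D powr a * (real n - a)"
    using step1 step2 step3 by linarith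
qed

theorem theorem2:
  fixes \<Delta> :: real
  assumes "0 < \<Delta>" and "\<Delta> \<le> 1"
  shows "\<exists>(M1::mdp) (\<pi>1::policy) (M2::mdp) (\<pi>2::policy) (\<theta>1::nat) \<theta>2.
           \<theta>1 \<noteq> \<theta>2 \<and>
           (KL_pmf (traj_dist M1 \<pi>1 \<theta>1) (traj_dist M1 \<pi>1 \<theta>2) = \<infinity> \<or>
            KL_pmf (traj_dist M1 \<pi>1 \<theta>2) (traj_dist M1 \<pi>1 \<theta>1) = \<infinity>) \<and>
           (KL_pmf (traj_dist M2 \<pi>2 \<theta>1) (traj_dist M2 \<pi>2 \<theta>2) = \<infinity> \<or>
            KL_pmf (traj_dist M2 \<pi>2 \<theta>2) (traj_dist M2 \<pi>2 \<theta>1) = \<infinity>) \<and>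
           Jret M1 \<pi>1 \<theta>1 - Jret M1 \<pi>1 \<theta>2 = \<Delta> \<and>
           Jret M2 \<pi>2 \<theta>2 - Jret M2 \<pi>2 \<theta>1 = \<Delta> \<and>
           (\<forall>n::nat. n \<ge> 1 \<longrightarrow> (\<forall>alg. valid_alg {\<theta>1, \<theta>2} alg \<longrightarrow>
              max (exp_regret M1 \<pi>1 {\<theta>1, \<theta>2} alg n) (exp_regret M2 \<pi>2 {\<theta>1, \<theta>2} alg n)
                \<ge> 1 / (8 * \<Delta>) * ln (\<Delta>^2 * real n)))"
proof -
  note D = assms
  have main: "max (exp_regret (MA \<Delta>) pol {0, 1} alg n) (exp_regret (MB \<Delta>) pol {0, 1} alg n)
                \<ge> 1 / (8 * \<Delta>) * ln (\<Delta>^2 * real n)" if n: "n \<ge> 1" for n :: nat and alg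
  proof -
    define a where "a = measure_pmf.expectation (hist_dist (MA \<Delta>) pol alg n) (\<lambda>h. real (c2 h))"
    have e1: "exp_regret (MA \<Delta>) pol {0, 1} alg n = \<Delta> * a"
      unfolding exp_regret_def regretA[OF D(1)] a_def by simp
    have e2: "exp_regret (MB \<Delta>) pol {0, 1} alg n
        = \<Delta> * measure_pmf.expectation (hist_dist (MB \<Delta>) pol alg n) (\<lambda>h. real (c1 h))"
      unfolding exp_regret_def regretB[OF D] by simp
    have lb: "0 \<le> a" "a \<le> real n"
      "measure_pmf.expectation (hist_dist (MB \<Delta>) pol alg n) (\<lambda>h. real (c1 h)) \<ge> qq \<Delta> powr a * (real n - a)"
      using lower_B[OF D, of alg n] unfolding a_def by auto
    have "exp_regret (MB \<Delta>) pol {0, 1} alg n \<ge> \<Delta> * (qq \<Delta> powr a * (real n - a))"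
      unfolding e2 using lb(3) D by (intro mult_left_mono) auto
    from numeric[OF D n lb(1,2) this] show ?thesis unfolding e1 .
  qed
  show ?thesis
    apply (rule exI[of _ "MA \<Delta>"], rule exI[of _ pol], rule exI[of _ "MB \<Delta>"], rule exI[of _ pol],
           rule exI[of _ 0], rule exI[of _ 1])
    using main D KLA[of \<Delta>] KLB[of \<Delta>] by (simp add: JA JB)
qed

end
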